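(* Let $t<n$, let $\mathcal{E}$ be an information exchange and $P$ a decision protocol for the hard crash context $(\mathcal{E},\mathit{Crash}_t)$ such that SBA($\mathcal{N}$) is valid in $\mathcal{I}_{P,\mathcal{E},\mathit{Crash}_t}$. Then for every agent $i$ and value $v$, the formulas $C_{\mathcal{A}}(\mathtt{decides}_{\mathcal{A}}(v))\Leftrightarrow CB_{\mathcal{N}}(\mathtt{decides}_{\mathcal{N}}(v))$ and $i\in\mathcal{A}\Rightarrow\big(K_i C_{\mathcal{A}}(\mathtt{decides}_{\mathcal{A}}(v))\Leftrightarrow B^{\mathcal{N}}_i CB_{\mathcal{N}}(\mathtt{decides}_{\mathcal{N}}(v))\big)$ are valid in $\mathcal{I}_{P,\mathcal{E},\mathit{Crash}_t}$.
   Context: Agents $\mathrm{Agt}=\{1,\dots,n\}$; decision values $V$; actions $A_i=\{\mathtt{noop}\}\cup\{\mathtt{decide}_i(v):v\in V\}$. An information exchange $\mathcal{E}$ gives each agent $i$ a tuple $(L_i,I_i,M_i,\mu_i,\delta_i)$: local states $L_i$ of the form $\langle\mathit{init}_i,\mathit{time}_i,\dots\rangle$ ($\mathit{init}_i\in V$ the initial preference) together with a distinguished state $\mathit{crashed}$; initial states $I_i$; messages $M_i\ni\bot$; $\mu_i:L_i\times A_i\to(\mathrm{Agt}\to M_i)$; $\delta_i:L_i\times A_i\times\prod_jM_j\to L_i$ (preserving $\mathit{init}_i$, incrementing $\mathit{time}_i$). A decision protocol is $P=(P_i:L_i\to A_i)_i$; in the hard crash model $P_i(\mathit{crashed})=\mathtt{noop}$.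 A failure model $(L^*_e,I_e,\delta_e,\mathit{Adv})$ has environment states, initial ones, update $\delta_e:L^*_e\times\prod_iA_i\to L^*_e$, adversaries $(\Delta^t,\Delta^r,\Delta^s)$, $\Delta^t,\Delta^r:\mathbb{N}\times\mathrm{Agt}\times\mathrm{Agt}\times\bigcup_iM_i\to\bigcup_iM_i$, $\Delta^s_i:\mathbb{N}\times L_i\to L_i$. Runs $r$ of $\mathcal{I}_{P,\mathcal{E},\mathcal{F}}$: $r(0)=((s_e,\alpha),s_1,\dots,s_n)$ with $s_e\in I_e,\alpha\in\mathit{Adv},s_i\in I_i$; from $r(k)=((s_e,\alpha),s_1,\dots,s_n)$, $r(k+1)=((\delta_e(s_e,(a_1,\dots,a_n)),\alpha),s'_1,\dots,s'_n)$ with $a_i=P_i(s_i)$, $m_{i,j}=\mu_i(s_i,a_i)(j)$, $m'_{i,j}=\Delta^r(k,i,j,\Delta^t(k,i,j,m_{i,j}))$, $s^*_j=\delta_j(s_j,a_j,(m'_{1,j},\dots,m'_{n,j}))$, $s'_j=\Delta^s_j(k,s^*_j)$. $\mathit{Crash}_t$: adversaries in which at most $t$ agents crash; $\Delta^r(k,i,j,m)=m$ always; an agent $i$ crashing in round $k+1$ has $\Delta^s_i(k',s)=\mathit{crashed}$ for all $s$ and $k'\ge k$, some $J\subseteq\mathrm{Agt}$ with $\Delta^t(k,i,j,m)=\bot$ for $j\in J$ and $=m$ otherwise, and $\Delta^t(k',i,j,m)=\bot$ for all $j$ and $k'>k$; otherwise $\Delta^s_i$ and $\Delta^t(\cdot,i,\cdot,\cdot)$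 act as identity. An agent has a fault in a round if its sent messages are altered, its received messages altered, or its updated state altered. $\mathcal{N}(r,m)$ = agents with no fault in any round of $r$; $\mathcal{A}(r,m)$ = agents with no fault in rounds $1..m$. $\mathtt{decides}_i(v)$ holds at $(r,m)$ iff $P_i(r_i(m))=\mathtt{decide}_i(v)$; $\mathtt{decides}_S(v):=\bigwedge_{i\in S}\mathtt{decides}_i(v)$. $(r,m)\sim_i(r',m')$ iff $r_i(m)=r'_i(m')$; $K_i\phi$ holds iff $\phi$ holds at all $\sim_i$-related points. For an indexical set $S$: $B^S_i\phi:=K_i(i\in S\Rightarrow\phi)$, $E^B_S\phi:=\bigwedge_{i\in S}B^S_i\phi$, $E_S\phi:=\bigwedge_{i\in S}K_i\phi$, $CB_S\phi:=\bigwedge_{k\ge1}(E^B_S)^k\phi$, $C_S\phi:=\bigwedge_{k\ge1}E_S^k\phi$. SBA($\mathcal{N}$) valid means in every run: each agent decides at most once; if $i\in\mathcal{N}(r,m)$ performs $\mathtt{decide}_i(v)$ at time $m$ then every $j\in\mathcal{N}(r,m)$ performs $\mathtt{decide}_j(v)$ at time $m$; and then some agent has initial preference $v$. *)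

theory Defs
  imports Main
begin

text \<open>Actions of agent i: noop or decide_i(v).  The agent index of decide_i is implicit
  (actions are always performed by the agent owning the protocol).\<close>
datatype 'v act = Noop | Decide 'v

text \<open>Local states: either the distinguished state crashed, or a tuple
  (init_i, time_i, rest).\<close>
datatype ('v, 'x) lstate = Crashed | St 'v nat 'x

fun linit :: "('v, 'x) lstate \<Rightarrow> 'v" where
  "linit (St v k x) = v"
| "linit Crashed = undefined"

text \<open>Messages: the type 'm option; None plays the role of the null message bot.\<close>

record ('a, 'v, 'x, 'm) iex =
  Lst   :: "'a \<Rightarrow> ('v, 'x) lstate set"
  Ist   :: "'a \<Rightarrow> ('v, 'x) lstate set"
  Msg   :: "'a \<Rightarrow> 'm option set"
  mu    :: "'a \<Rightarrow> ('v, 'x) lstate \<Rightarrow> 'v act \<Rightarrow> 'a \<Rightarrow> 'm option"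
  delta :: "'a \<Rightarrow> ('v, 'x) lstate \<Rightarrow> 'v act \<Rightarrow> ('a \<Rightarrow> 'm option) \<Rightarrow> ('v, 'x) lstate"

text \<open>Well-formedness of an information exchange.  delta i s a ms receives in ms j the
  message received from agent j.\<close>
definition iex_wf :: "('a, 'v, 'x, 'm) iex \<Rightarrow> bool" where
  "iex_wf E \<longleftrightarrow>
     (\<forall>i. Crashed \<in> Lst E i) \<and>
     (\<forall>i. Ist E i \<subseteq> Lst E i) \<and>
     (\<forall>i s. s \<in> Ist E i \<longrightarrow> (\<exists>v x. s = St v 0 x)) \<and>
     (\<forall>i. None \<in> Msg E i) \<and>
     (\<forall>i s a j. s \<in> Lst E i \<longrightarrow> mu E i s a j \<in> Msg E i) \<and>
     (\<forall>i s a ms. s \<in> Lst E i \<longrightarrow> (\<forall>j. ms j \<in> Msg E j) \<longrightarrow> delta E i s a ms \<in> Lst E i) \<and>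
     (\<forall>i v k x a ms. St v k x \<in> Lst E i \<longrightarrow> (\<forall>j. ms j \<in> Msg E j) \<longrightarrow>
         (\<exists>x'. delta E i (St v k x) a ms = St v (Suc k) x'))"

definition hard_crash_protocol :: "('a \<Rightarrow> ('v, 'x) lstate \<Rightarrow> 'v act) \<Rightarrow> bool" where
  "hard_crash_protocol P \<longleftrightarrow> (\<forall>i. P i Crashed = Noop)"

record ('a, 'v, 'x, 'm) adv =
  dT :: "nat \<Rightarrow> 'a \<Rightarrow> 'a \<Rightarrow> 'm option \<Rightarrow> 'm option"
  dR :: "nat \<Rightarrow> 'a \<Rightarrow> 'a \<Rightarrow> 'm option \<Rightarrow> 'm option"
  dS :: "'a \<Rightarrow> nat \<Rightarrow> ('v, 'x) lstate \<Rightarrow> ('v, 'x) lstate"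

text \<open>Agent i crashes in round k+1 under adversary alpha.\<close>
definition crashes_at :: "('a, 'v, 'x, 'm) adv \<Rightarrow> 'a \<Rightarrow> nat \<Rightarrow> bool" where
  "crashes_at \<alpha> i k \<longleftrightarrow>
     (\<forall>k' s. k' \<ge> k \<longrightarrow> dS \<alpha> i k' s = Crashed) \<and>
     (\<forall>k' s. k' < k \<longrightarrow> dS \<alpha> i k' s = s) \<and>
     (\<exists>J. \<forall>j m. dT \<alpha> k i j m = (if j \<in> J then None else m)) \<and>
     (\<forall>k' j m. k' > k \<longrightarrow> dT \<alpha> k' i j m = None) \<and>
     (\<forall>k' j m. k' < k \<longrightarrow> dT \<alpha> k' i j m = m)"

definition never_crashes :: "('a, 'v, 'x, 'm) adv \<Rightarrow> 'a \<Rightarrow> bool" where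
  "never_crashes \<alpha> i \<longleftrightarrow> (\<forall>k s. dS \<alpha> i k s = s) \<and> (\<forall>k j m. dT \<alpha> k i j m = m)"

definition Crash :: "nat \<Rightarrow> ('a, 'v, 'x, 'm) adv set" where
  "Crash t = {\<alpha>. (\<forall>k i j m. dR \<alpha> k i j m = m) \<and>
                 (\<forall>i. never_crashes \<alpha> i \<or> (\<exists>k. crashes_at \<alpha> i k)) \<and>
                 finite {i. \<exists>k. crashes_at \<alpha> i k} \<and>
                 card {i. \<exists>k. crashes_at \<alpha> i k} \<le> t}"

type_synonym ('e, 'a, 'v, 'x, 'm) gstate =
  "('e \<times> ('a, 'v, 'x, 'm) adv) \<times> ('a \<Rightarrow> ('v, 'x) lstate)"

type_synonym ('e, 'a, 'v, 'x, 'm) run = "nat \<Rightarrow> ('e, 'a, 'v, 'x, 'm) gstate"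

definition loc :: "('e, 'a, 'v, 'x, 'm) run \<Rightarrow> nat \<Rightarrow> 'a \<Rightarrow> ('v, 'x) lstate" where
  "loc r m i = snd (r m) i"

definition advr :: "('e, 'a, 'v, 'x, 'm) run \<Rightarrow> ('a, 'v, 'x, 'm) adv" where
  "advr r = snd (fst (r 0))"

text \<open>Messages sent from i to j in round k+1 (computed from r(k)).\<close>
definition sent :: "('a, 'v, 'x, 'm) iex \<Rightarrow> ('a \<Rightarrow> ('v, 'x) lstate \<Rightarrow> 'v act)
    \<Rightarrow> ('a \<Rightarrow> ('v, 'x) lstate) \<Rightarrow> 'a \<Rightarrow> 'a \<Rightarrow> 'm option" where
  "sent E P s i j = mu E i (s i) (P i (s i)) j"

definition recvd :: "('a, 'v, 'x, 'm) iex \<Rightarrow> ('a \<Rightarrow> ('v, 'x) lstate \<Rightarrow> 'v act)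
    \<Rightarrow> ('a, 'v, 'x, 'm) adv \<Rightarrow> nat \<Rightarrow> ('a \<Rightarrow> ('v, 'x) lstate) \<Rightarrow> 'a \<Rightarrow> 'a \<Rightarrow> 'm option" where
  "recvd E P \<alpha> k s i j = dR \<alpha> k i j (dT \<alpha> k i j (sent E P s i j))"

definition sstar :: "('a, 'v, 'x, 'm) iex \<Rightarrow> ('a \<Rightarrow> ('v, 'x) lstate \<Rightarrow> 'v act)
    \<Rightarrow> ('a, 'v, 'x, 'm) adv \<Rightarrow> nat \<Rightarrow> ('a \<Rightarrow> ('v, 'x) lstate) \<Rightarrow> 'a \<Rightarrow> ('v, 'x) lstate" where
  "sstar E P \<alpha> k s j = delta E j (s j) (P j (s j)) (\<lambda>i. recvd E P \<alpha> k s i j)"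

definition gstep :: "('a, 'v, 'x, 'm) iex \<Rightarrow> ('a \<Rightarrow> ('v, 'x) lstate \<Rightarrow> 'v act)
    \<Rightarrow> ('e \<Rightarrow> ('a \<Rightarrow> 'v act) \<Rightarrow> 'e) \<Rightarrow> nat
    \<Rightarrow> ('e, 'a, 'v, 'x, 'm) gstate \<Rightarrow> ('e, 'a, 'v, 'x, 'm) gstate" where
  "gstep E P de k g =
     (let se = fst (fst g); \<alpha> = snd (fst g); s = snd g
      in ((de se (\<lambda>i. P i (s i)), \<alpha>), (\<lambda>j. dS \<alpha> j k (sstar E P \<alpha> k s j))))"

text \<open>The runs of I_{P,E,F} for the failure model F = (L_e, Ie, de, Crash t).\<close>
definition runs :: "('a, 'v, 'x, 'm) iex \<Rightarrow> ('a \<Rightarrow> ('v, 'x) lstate \<Rightarrow> 'v act)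
    \<Rightarrow> 'e set \<Rightarrow> ('e \<Rightarrow> ('a \<Rightarrow> 'v act) \<Rightarrow> 'e) \<Rightarrow> nat \<Rightarrow> ('e, 'a, 'v, 'x, 'm) run set" where
  "runs E P Ie de t = {r.
     fst (fst (r 0)) \<in> Ie \<and> snd (fst (r 0)) \<in> Crash t \<and> (\<forall>i. snd (r 0) i \<in> Ist E i) \<and>
     (\<forall>k. r (Suc k) = gstep E P de k (r k))}"

text \<open>Agent i has a fault in round k+1 of run r.\<close>
definition fault :: "('a, 'v, 'x, 'm) iex \<Rightarrow> ('a \<Rightarrow> ('v, 'x) lstate \<Rightarrow> 'v act)
    \<Rightarrow> ('e, 'a, 'v, 'x, 'm) run \<Rightarrow> 'a \<Rightarrow> nat \<Rightarrow> bool" where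
  "fault E P r i k \<longleftrightarrow>
     (let \<alpha> = snd (fst (r k)); s = snd (r k) in
        (\<exists>j. dT \<alpha> k i j (sent E P s i j) \<noteq> sent E P s i j) \<or>
        (\<exists>j. dR \<alpha> k j i (dT \<alpha> k j i (sent E P s j i)) \<noteq> dT \<alpha> k j i (sent E P s j i)) \<or>
        dS \<alpha> i k (sstar E P \<alpha> k s i) \<noteq> sstar E P \<alpha> k s i)"

definition Nset :: "('a, 'v, 'x, 'm) iex \<Rightarrow> ('a \<Rightarrow> ('v, 'x) lstate \<Rightarrow> 'v act)
    \<Rightarrow> ('e, 'a, 'v, 'x, 'm) run \<Rightarrow> nat \<Rightarrow> 'a set" where
  "Nset E P r m = {i. \<forall>k. \<not> fault E P r i k}"

definition Aset :: "('a, 'v, 'x, 'm) iex \<Rightarrow> ('a \<Rightarrow> ('v, 'x) lstate \<Rightarrow> 'v act)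
    \<Rightarrow> ('e, 'a, 'v, 'x, 'm) run \<Rightarrow> nat \<Rightarrow> 'a set" where
  "Aset E P r m = {i. \<forall>k<m. \<not> fault E P r i k}"

section \<open>Epistemic operators over a system R (formulas = predicates on points)\<close>

type_synonym ('e, 'a, 'v, 'x, 'm) fml = "('e, 'a, 'v, 'x, 'm) run \<Rightarrow> nat \<Rightarrow> bool"

definition valid :: "('e, 'a, 'v, 'x, 'm) run set \<Rightarrow> ('e, 'a, 'v, 'x, 'm) fml \<Rightarrow> bool" where
  "valid R \<phi> \<longleftrightarrow> (\<forall>r\<in>R. \<forall>m. \<phi> r m)"

definition Kn :: "('e, 'a, 'v, 'x, 'm) run set \<Rightarrow> 'a \<Rightarrow> ('e, 'a, 'v, 'x, 'm) fml
    \<Rightarrow> ('e, 'a, 'v, 'x, 'm) fml" where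
  "Kn R i \<phi> r m \<longleftrightarrow> (\<forall>r'\<in>R. \<forall>m'. loc r' m' i = loc r m i \<longrightarrow> \<phi> r' m')"

definition Bel :: "('e, 'a, 'v, 'x, 'm) run set \<Rightarrow> (('e, 'a, 'v, 'x, 'm) run \<Rightarrow> nat \<Rightarrow> 'a set)
    \<Rightarrow> 'a \<Rightarrow> ('e, 'a, 'v, 'x, 'm) fml \<Rightarrow> ('e, 'a, 'v, 'x, 'm) fml" where
  "Bel R S i \<phi> = Kn R i (\<lambda>r m. i \<in> S r m \<longrightarrow> \<phi> r m)"

definition EB :: "('e, 'a, 'v, 'x, 'm) run set \<Rightarrow> (('e, 'a, 'v, 'x, 'm) run \<Rightarrow> nat \<Rightarrow> 'a set)
    \<Rightarrow> ('e, 'a, 'v, 'x, 'm) fml \<Rightarrow> ('e, 'a, 'v, 'x, 'm) fml" where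
  "EB R S \<phi> r m \<longleftrightarrow> (\<forall>i\<in>S r m. Bel R S i \<phi> r m)"

definition Ek :: "('e, 'a, 'v, 'x, 'm) run set \<Rightarrow> (('e, 'a, 'v, 'x, 'm) run \<Rightarrow> nat \<Rightarrow> 'a set)
    \<Rightarrow> ('e, 'a, 'v, 'x, 'm) fml \<Rightarrow> ('e, 'a, 'v, 'x, 'm) fml" where
  "Ek R S \<phi> r m \<longleftrightarrow> (\<forall>i\<in>S r m. Kn R i \<phi> r m)"

definition CB :: "('e, 'a, 'v, 'x, 'm) run set \<Rightarrow> (('e, 'a, 'v, 'x, 'm) run \<Rightarrow> nat \<Rightarrow> 'a set)
    \<Rightarrow> ('e, 'a, 'v, 'x, 'm) fml \<Rightarrow> ('e, 'a, 'v, 'x, 'm) fml" where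
  "CB R S \<phi> r m \<longleftrightarrow> (\<forall>k\<ge>1. (EB R S ^^ k) \<phi> r m)"

definition Ck :: "('e, 'a, 'v, 'x, 'm) run set \<Rightarrow> (('e, 'a, 'v, 'x, 'm) run \<Rightarrow> nat \<Rightarrow> 'a set)
    \<Rightarrow> ('e, 'a, 'v, 'x, 'm) fml \<Rightarrow> ('e, 'a, 'v, 'x, 'm) fml" where
  "Ck R S \<phi> r m \<longleftrightarrow> (\<forall>k\<ge>1. (Ek R S ^^ k) \<phi> r m)"

definition decides :: "('a \<Rightarrow> ('v, 'x) lstate \<Rightarrow> 'v act) \<Rightarrow> 'a \<Rightarrow> 'v \<Rightarrow> ('e, 'a, 'v, 'x, 'm) fml" where
  "decides P i v r m \<longleftrightarrow> P i (loc r m i) = Decide v"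

definition decidesS :: "('a \<Rightarrow> ('v, 'x) lstate \<Rightarrow> 'v act)
    \<Rightarrow> (('e, 'a, 'v, 'x, 'm) run \<Rightarrow> nat \<Rightarrow> 'a set) \<Rightarrow> 'v \<Rightarrow> ('e, 'a, 'v, 'x, 'm) fml" where
  "decidesS P S v r m \<longleftrightarrow> (\<forall>i\<in>S r m. decides P i v r m)"

definition SBA_N_valid :: "('a, 'v, 'x, 'm) iex \<Rightarrow> ('a \<Rightarrow> ('v, 'x) lstate \<Rightarrow> 'v act)
    \<Rightarrow> ('e, 'a, 'v, 'x, 'm) run set \<Rightarrow> bool" where
  "SBA_N_valid E P R \<longleftrightarrow> (\<forall>r\<in>R.
     (\<forall>i m m' v v'. decides P i v r m \<longrightarrow> decides P i v' r m' \<longrightarrow> m = m') \<and>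
     (\<forall>i m v. i \<in> Nset E P r m \<longrightarrow> decides P i v r m \<longrightarrow>
        (\<forall>j\<in>Nset E P r m. decides P j v r m) \<and> (\<exists>j. linit (loc r 0 j) = v)))"

end

theory Submission
  imports Defs
begin


lemma loc_eq: "loc r k = snd (r k)" by (rule ext) (simp add: loc_def)

lemma run_step: "r \<in> runs E P Ie de t \<Longrightarrow> r (Suc k) = gstep E P de k (r k)"
  by (simp add: runs_def)

lemma adv_const: assumes "r \<in> runs E P Ie de t" shows "snd (fst (r k)) = advr r"
proof (induction k)
  case 0 then show ?case by (simp add: advr_def)
next
  case (Suc k) then show ?case using run_step[OF assms, of k] by (simp add: gstep_def Let_def)
qed

lemma adv_Crash: "r \<in> runs E P Ie de t \<Longrightarrow> advr r \<in> Crash t"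
  by (simp add: runs_def advr_def)

lemma loc_Suc: assumes "r \<in> runs E P Ie de t"
  shows "loc r (Suc k) i = dS (advr r) i k (sstar E P (advr r) k (loc r k) i)"
  using run_step[OF assms, of k] adv_const[OF assms, of k]
  by (simp add: gstep_def Let_def loc_eq)

lemma crash_cases: "\<alpha> \<in> Crash t \<Longrightarrow> never_crashes \<alpha> i \<or> (\<exists>k. crashes_at \<alpha> i k)"
  by (simp add: Crash_def)

lemma dR_id: "\<alpha> \<in> Crash t \<Longrightarrow> dR \<alpha> k i j x = x"
  by (simp add: Crash_def)

lemma dT_cases: assumes "\<alpha> \<in> Crash t" shows "dT \<alpha> k i j x = x \<or> dT \<alpha> k i j x = None"
proof -
  from crash_cases[OF assms, of i] show ?thesis
  proof
    assume "never_crashes \<alpha> i" then show ?thesis by (simp add: never_crashes_def)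
  next
    assume "\<exists>k. crashes_at \<alpha> i k"
    then obtain k0 where c: "crashes_at \<alpha> i k0" by blast
    show ?thesis
    proof (cases k k0 rule: linorder_cases)
      case less then show ?thesis using c by (simp add: crashes_at_def)
    next
      case equal then show ?thesis using c unfolding crashes_at_def by (metis (full_types))
    next
      case greater then show ?thesis using c by (simp add: crashes_at_def)
    qed
  qed
qed

lemma dS_cases: assumes "\<alpha> \<in> Crash t" shows "dS \<alpha> i k s = s \<or> dS \<alpha> i k s = Crashed"
proof -
  from crash_cases[OF assms, of i] show ?thesis
  proof
    assume "never_crashes \<alpha> i" then show ?thesis by (simp add: never_crashes_def)
  next
    assume "\<exists>k. crashes_at \<alpha> i k"
    then obtain k0 where c: "crashes_at \<alpha> i k0" by blast
    show ?thesis
    proof (cases "k < k0")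
      case True then show ?thesis using c by (simp add: crashes_at_def)
    next
      case False then show ?thesis using c by (simp add: crashes_at_def)
    qed
  qed
qed

lemma wf_crashed: "iex_wf E \<Longrightarrow> Crashed \<in> Lst E i" by (simp add: iex_wf_def)
lemma wf_ist: "iex_wf E \<Longrightarrow> s \<in> Ist E i \<Longrightarrow> s \<in> Lst E i" by (auto simp add: iex_wf_def)
lemma wf_ist_st: "iex_wf E \<Longrightarrow> s \<in> Ist E i \<Longrightarrow> \<exists>v x. s = St v 0 x" by (simp add: iex_wf_def)
lemma wf_step: "iex_wf E \<Longrightarrow> St v k x \<in> Lst E i \<Longrightarrow> (\<forall>j. ms j \<in> Msg E j) \<Longrightarrow>
         \<exists>x'. delta E i (St v k x) a ms = St v (Suc k) x'" by (simp add: iex_wf_def)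

lemma recvd_Msg: assumes "iex_wf E" "\<alpha> \<in> Crash t" "\<forall>j. s j \<in> Lst E j"
  shows "recvd E P \<alpha> k s i j \<in> Msg E i"
proof -
  have w: "\<forall>i s a j. s \<in> Lst E i \<longrightarrow> mu E i s a j \<in> Msg E i" using assms(1) unfolding iex_wf_def by simp
  have "sent E P s i j \<in> Msg E i" unfolding sent_def using w assms(3) by simp
  moreover have "None \<in> Msg E i" using assms unfolding iex_wf_def by blast
  ultimately show ?thesis using dT_cases[OF assms(2), of k i j "sent E P s i j"]
    by (auto simp: recvd_def dR_id[OF assms(2)])
qed

lemma sstar_Lst: assumes "iex_wf E" "\<alpha> \<in> Crash t" "\<forall>j. s j \<in> Lst E j"
  shows "sstar E P \<alpha> k s j \<in> Lst E j"
proof -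
  have "\<forall>i. recvd E P \<alpha> k s i j \<in> Msg E i" using recvd_Msg[OF assms] by blast
  moreover have w: "\<forall>i s a ms. s \<in> Lst E i \<longrightarrow> (\<forall>j. ms j \<in> Msg E j) \<longrightarrow> delta E i s a ms \<in> Lst E i"
    using assms(1) unfolding iex_wf_def by simp
  ultimately show ?thesis using assms(3) unfolding sstar_def by simp
qed

lemma sstar_nc: assumes "iex_wf E" "\<alpha> \<in> Crash t" "\<forall>j. s j \<in> Lst E j" "s j \<noteq> Crashed"
  shows "sstar E P \<alpha> k s j \<noteq> Crashed"
proof -
  have m: "\<forall>i. recvd E P \<alpha> k s i j \<in> Msg E i" using recvd_Msg[OF assms(1-3)] by blast
  obtain v k' x where sj: "s j = St v k' x" using assms(4) by (cases "s j") auto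
  have "St v k' x \<in> Lst E j" using assms(3) sj by metis
  then obtain x' where "delta E j (St v k' x) (P j (s j)) (\<lambda>i. recvd E P \<alpha> k s i j) = St v (Suc k') x'"
    using wf_step[OF assms(1) \<open>St v k' x \<in> Lst E j\<close> m] by blast
  then show ?thesis by (simp add: sstar_def sj)
qed

lemma Lst_inv: assumes "iex_wf E" "r \<in> runs E P Ie de t" shows "\<forall>j. loc r k j \<in> Lst E j"
proof (induction k)
  case 0
  have "\<forall>i. snd (r 0) i \<in> Ist E i" using assms(2) by (simp add: runs_def)
  then show ?case using wf_ist[OF assms(1)] by (simp add: loc_def)
next
  case (Suc k)
  have C: "advr r \<in> Crash t" using adv_Crash[OF assms(2)] .
  show ?case
  proof
    fix j
    have "sstar E P (advr r) k (loc r k) j \<in> Lst E j" using sstar_Lst[OF assms(1) C Suc] .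
    moreover have "Crashed \<in> Lst E j" using wf_crashed[OF assms(1)] .
    ultimately show "loc r (Suc k) j \<in> Lst E j" using loc_Suc[OF assms(2)] dS_cases[OF C]
      by metis
  qed
qed

lemma init_nc: assumes "iex_wf E" "r \<in> runs E P Ie de t" shows "loc r 0 i \<noteq> Crashed"
proof -
  have "loc r 0 i \<in> Ist E i" using assms(2) by (simp add: runs_def loc_def)
  then show ?thesis using wf_ist_st[OF assms(1)] by fastforce
qed

lemma never_alive: assumes "iex_wf E" "r \<in> runs E P Ie de t" "never_crashes (advr r) i"
  shows "loc r k i \<noteq> Crashed"
proof (induction k)
  case 0 show ?case using init_nc[OF assms(1,2)] by blast
next
  case (Suc k)
  have C: "advr r \<in> Crash t" using adv_Crash[OF assms(2)] .
  show ?case using loc_Suc[OF assms(2)] assms(3) sstar_nc[OF assms(1) C Lst_inv[OF assms(1,2)] Suc]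
    by (simp add: never_crashes_def)
qed

lemma crash_alive: assumes "iex_wf E" "r \<in> runs E P Ie de t" "crashes_at (advr r) i k0"
  shows "k \<le> k0 \<Longrightarrow> loc r k i \<noteq> Crashed"
proof (induction k)
  case 0 show ?case using init_nc[OF assms(1,2)] by blast
next
  case (Suc k)
  have C: "advr r \<in> Crash t" using adv_Crash[OF assms(2)] .
  have "loc r k i \<noteq> Crashed" using Suc by simp
  then show ?case using loc_Suc[OF assms(2)] assms(3) Suc.prems
     sstar_nc[OF assms(1) C Lst_inv[OF assms(1,2)]]
    by (simp add: crashes_at_def)
qed

lemma crash_dead: assumes "r \<in> runs E P Ie de t" "crashes_at (advr r) i k0" "k0 < k"
  shows "loc r k i = Crashed"
proof -
  obtain k' where k: "k = Suc k'" "k0 \<le> k'" using assms(3) by (cases k) auto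
  then show ?thesis using loc_Suc[OF assms(1)] assms(2) by (simp add: crashes_at_def)
qed

lemma fault_unf: assumes "r \<in> runs E P Ie de t"
  shows "fault E P r i k \<longleftrightarrow>
        (\<exists>j. dT (advr r) k i j (sent E P (loc r k) i j) \<noteq> sent E P (loc r k) i j) \<or>
        (\<exists>j. dR (advr r) k j i (dT (advr r) k j i (sent E P (loc r k) j i)) \<noteq> dT (advr r) k j i (sent E P (loc r k) j i)) \<or>
        dS (advr r) i k (sstar E P (advr r) k (loc r k) i) \<noteq> sstar E P (advr r) k (loc r k) i"
  by (simp add: fault_def adv_const[OF assms] loc_eq Let_def)

lemma no_fault_never: assumes "r \<in> runs E P Ie de t" "never_crashes (advr r) i"
  shows "\<not> fault E P r i k"
  using assms(2) dR_id[OF adv_Crash[OF assms(1)]]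
  by (simp add: fault_unf[OF assms(1)] never_crashes_def)

lemma no_fault_before: assumes "r \<in> runs E P Ie de t" "crashes_at (advr r) i k0" "k < k0"
  shows "\<not> fault E P r i k"
  using assms(2,3) dR_id[OF adv_Crash[OF assms(1)]]
  by (simp add: fault_unf[OF assms(1)] crashes_at_def)

lemma fault_at: assumes "iex_wf E" "r \<in> runs E P Ie de t" "crashes_at (advr r) i k0"
  shows "fault E P r i k0"
proof -
  have C: "advr r \<in> Crash t" using adv_Crash[OF assms(2)] .
  have "sstar E P (advr r) k0 (loc r k0) i \<noteq> Crashed"
    using sstar_nc[OF assms(1) C Lst_inv[OF assms(1,2)] crash_alive[OF assms, of k0]] by simp
  moreover have "dS (advr r) i k0 (sstar E P (advr r) k0 (loc r k0) i) = Crashed"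
    using assms(3) by (simp add: crashes_at_def)
  ultimately show ?thesis by (simp add: fault_unf[OF assms(2)])
qed

lemma N_char: assumes "iex_wf E" "r \<in> runs E P Ie de t"
  shows "i \<in> Nset E P r m \<longleftrightarrow> never_crashes (advr r) i"
proof
  assume a: "i \<in> Nset E P r m"
  show "never_crashes (advr r) i"
  proof (rule ccontr)
    assume "\<not> never_crashes (advr r) i"
    then obtain k where "crashes_at (advr r) i k" using crash_cases[OF adv_Crash[OF assms(2)], of i] by blast
    then have "fault E P r i k" using fault_at[OF assms] by blast
    then show False using a by (simp add: Nset_def)
  qed
next
  assume "never_crashes (advr r) i"
  then show "i \<in> Nset E P r m" using no_fault_never[OF assms(2)] by (simp add: Nset_def)
qed

lemma A_char: assumes "iex_wf E" "r \<in> runs E P Ie de t"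
  shows "i \<in> Aset E P r m \<longleftrightarrow> never_crashes (advr r) i \<or> (\<exists>k\<ge>m. crashes_at (advr r) i k)"
proof
  assume a: "i \<in> Aset E P r m"
  show "never_crashes (advr r) i \<or> (\<exists>k\<ge>m. crashes_at (advr r) i k)"
  proof (rule ccontr)
    assume n: "\<not> ?thesis"
    then obtain k where c: "crashes_at (advr r) i k" using crash_cases[OF adv_Crash[OF assms(2)], of i] by blast
    then have "k < m" using n by (meson not_le)
    moreover have "fault E P r i k" using fault_at[OF assms c] .
    ultimately show False using a by (simp add: Aset_def)
  qed
next
  assume "never_crashes (advr r) i \<or> (\<exists>k\<ge>m. crashes_at (advr r) i k)"
  then show "i \<in> Aset E P r m"
  proof
    assume "never_crashes (advr r) i" then show ?thesis
      using no_fault_never[OF assms(2)] by (simp add: Aset_def)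
  next
    assume "\<exists>k\<ge>m. crashes_at (advr r) i k"
    then obtain k0 where k0: "k0 \<ge> m" "crashes_at (advr r) i k0" by blast
    have "\<not> fault E P r i k" if "k < m" for k
      using no_fault_before[OF assms(2) k0(2)] that k0(1) by simp
    then show ?thesis by (simp add: Aset_def)
  qed
qed

lemma A_alive: assumes "iex_wf E" "r \<in> runs E P Ie de t"
  shows "i \<in> Aset E P r m \<longleftrightarrow> loc r m i \<noteq> Crashed"
proof (cases "never_crashes (advr r) i")
  case True
  then have "i \<in> Aset E P r m" using A_char[OF assms] by simp
  moreover have "loc r m i \<noteq> Crashed" using never_alive[OF assms True] .
  ultimately show ?thesis by simp
next
  case False
  then obtain k0 where c: "crashes_at (advr r) i k0"
    using crash_cases[OF adv_Crash[OF assms(2)], of i] by blast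
  show ?thesis
  proof (cases "m \<le> k0")
    case True
    then have "i \<in> Aset E P r m" using A_char[OF assms] c by blast
    moreover have "loc r m i \<noteq> Crashed" using crash_alive[OF assms c True] .
    ultimately show ?thesis by simp
  next
    case False
    then have "i \<notin> Aset E P r m" using fault_at[OF assms c] by (auto simp add: Aset_def not_le)
    moreover have "loc r m i = Crashed" using crash_dead[OF assms(2) c] False by simp
    ultimately show ?thesis by simp
  qed
qed

lemma N_nonempty: assumes "iex_wf E" "r \<in> runs E P Ie de t" "t < card (UNIV :: 'a::finite set)"
  shows "\<exists>j::'a. j \<in> Nset E P r m"
proof -
  let ?C = "{i::'a. \<exists>k. crashes_at (advr r) i k}"
  have "card ?C \<le> t" using adv_Crash[OF assms(2)] by (simp add: Crash_def)
  then have "?C \<noteq> UNIV" using assms(3) by auto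
  then obtain j where "j \<notin> ?C" by blast
  then have "never_crashes (advr r) j" using crash_cases[OF adv_Crash[OF assms(2)], of j] by blast
  then show ?thesis using N_char[OF assms(1,2)] by blast
qed



definition late :: "('a, 'v, 'x, 'm) adv \<Rightarrow> nat \<Rightarrow> 'a set" where
  "late \<alpha> m = {i. \<exists>k\<ge>m. crashes_at \<alpha> i k}"

definition fixadv :: "('a, 'v, 'x, 'm) adv \<Rightarrow> nat \<Rightarrow> ('a, 'v, 'x, 'm) adv" where
  "fixadv \<alpha> m = \<alpha>\<lparr>dT := (\<lambda>k i j x. if i \<in> late \<alpha> m then x else dT \<alpha> k i j x),
                  dS := (\<lambda>i k s. if i \<in> late \<alpha> m then s else dS \<alpha> i k s)\<rparr>"

primrec runfrom :: "('a, 'v, 'x, 'm) iex \<Rightarrow> ('a \<Rightarrow> ('v, 'x) lstate \<Rightarrow> 'v act)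
    \<Rightarrow> ('e \<Rightarrow> ('a \<Rightarrow> 'v act) \<Rightarrow> 'e) \<Rightarrow> ('e, 'a, 'v, 'x, 'm) gstate \<Rightarrow> nat
    \<Rightarrow> ('e, 'a, 'v, 'x, 'm) gstate" where
  "runfrom E P de g 0 = g"
| "runfrom E P de g (Suc k) = gstep E P de k (runfrom E P de g k)"

definition fixr :: "('a, 'v, 'x, 'm) iex \<Rightarrow> ('a \<Rightarrow> ('v, 'x) lstate \<Rightarrow> 'v act)
    \<Rightarrow> ('e \<Rightarrow> ('a \<Rightarrow> 'v act) \<Rightarrow> 'e) \<Rightarrow> ('e, 'a, 'v, 'x, 'm) run \<Rightarrow> nat
    \<Rightarrow> ('e, 'a, 'v, 'x, 'm) run" where
  "fixr E P de r m = runfrom E P de ((fst (fst (r 0)), fixadv (advr r) m), snd (r 0))"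

lemma fix_dR[simp]: "dR (fixadv \<alpha> m) = dR \<alpha>" by (simp add: fixadv_def)
lemma fix_dT: "dT (fixadv \<alpha> m) k i j x = (if i \<in> late \<alpha> m then x else dT \<alpha> k i j x)"
  by (simp add: fixadv_def)
lemma fix_dS: "dS (fixadv \<alpha> m) i k s = (if i \<in> late \<alpha> m then s else dS \<alpha> i k s)"
  by (simp add: fixadv_def)

lemma fix_never: "never_crashes (fixadv \<alpha> m) i \<longleftrightarrow> i \<in> late \<alpha> m \<or> never_crashes \<alpha> i"
  by (auto simp: never_crashes_def fix_dT fix_dS)

lemma fix_crashes: "crashes_at (fixadv \<alpha> m) i k \<longleftrightarrow> i \<notin> late \<alpha> m \<and> crashes_at \<alpha> i k"
proof (cases "i \<in> late \<alpha> m")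
  case True
  have "dS (fixadv \<alpha> m) i k (St undefined 0 undefined) \<noteq> Crashed" using True by (simp add: fix_dS)
  then show ?thesis using True by (auto simp: crashes_at_def)
next
  case False
  then show ?thesis by (simp add: crashes_at_def fix_dT fix_dS)
qed

lemma fix_Crash: assumes "\<alpha> \<in> Crash t" shows "fixadv \<alpha> m \<in> Crash t"
proof -
  have a: "\<forall>k i j x. dR \<alpha> k i j x = x" "\<forall>i. never_crashes \<alpha> i \<or> (\<exists>k. crashes_at \<alpha> i k)"
    "finite {i. \<exists>k. crashes_at \<alpha> i k}" "card {i. \<exists>k. crashes_at \<alpha> i k} \<le> t"
    using assms by (simp_all add: Crash_def)
  have sub: "{i. \<exists>k. crashes_at (fixadv \<alpha> m) i k} \<subseteq> {i. \<exists>k. crashes_at \<alpha> i k}"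
    by (auto simp: fix_crashes)
  have "\<forall>i. never_crashes (fixadv \<alpha> m) i \<or> (\<exists>k. crashes_at (fixadv \<alpha> m) i k)"
    using a(2) by (auto simp: fix_never fix_crashes)
  moreover have "finite {i. \<exists>k. crashes_at (fixadv \<alpha> m) i k}" using finite_subset[OF sub a(3)] .
  moreover have "card {i. \<exists>k. crashes_at (fixadv \<alpha> m) i k} \<le> t"
    using card_mono[OF a(3) sub] a(4) by linarith
  ultimately show ?thesis using a(1) by (simp add: Crash_def)
qed

lemma fixr_runs: assumes "r \<in> runs E P Ie de t" shows "fixr E P de r m \<in> runs E P Ie de t"
  using assms fix_Crash[OF adv_Crash[OF assms]]
  by (simp add: runs_def fixr_def advr_def)

lemma advr_fixr: "advr (fixr E P de r m) = fixadv (advr r) m"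
  by (simp add: fixr_def advr_def)

lemma fixr_loc: assumes "r \<in> runs E P Ie de t"
  shows "k \<le> m \<Longrightarrow> loc (fixr E P de r m) k = loc r k"
proof (induction k)
  case 0 then show ?case by (simp add: fixr_def loc_eq)
next
  case (Suc k)
  let ?r = "fixr E P de r m"
  let ?a = "advr r"
  have km: "k < m" using Suc.prems by simp
  have IH: "loc ?r k = loc r k" using Suc by simp
  have dT_eq: "dT (fixadv ?a m) k i j x = dT ?a k i j x" for i j x
  proof (cases "i \<in> late ?a m")
    case True
    then obtain k0 where "k0 \<ge> m" "crashes_at ?a i k0" by (auto simp: late_def)
    then show ?thesis using km by (simp add: fix_dT crashes_at_def)
  qed (simp add: fix_dT)
  have dS_eq: "dS (fixadv ?a m) i k s = dS ?a i k s" for i s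
  proof (cases "i \<in> late ?a m")
    case True
    then obtain k0 where "k0 \<ge> m" "crashes_at ?a i k0" by (auto simp: late_def)
    then show ?thesis using km by (simp add: fix_dS crashes_at_def)
  qed (simp add: fix_dS)
  have ss: "sstar E P (fixadv ?a m) k s = sstar E P ?a k s" for s
    by (rule ext) (simp add: sstar_def recvd_def dT_eq)
  show ?case
    by (rule ext) (simp add: loc_Suc[OF fixr_runs[OF assms]] loc_Suc[OF assms] advr_fixr IH ss dS_eq)
qed

lemma fixr_N: assumes "iex_wf E" "r \<in> runs E P Ie de t"
  shows "Nset E P (fixr E P de r m) m' = Aset E P r m"
  using N_char[OF assms(1) fixr_runs[OF assms(2)]] A_char[OF assms]
  by (auto simp: advr_fixr fix_never late_def)



definition stK where
  "stK R S p q \<longleftrightarrow> fst q \<in> R \<and> (\<exists>i\<in>S (fst p) (snd p). loc (fst q) (snd q) i = loc (fst p) (snd p) i)"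

definition stB where
  "stB R S p q \<longleftrightarrow> fst q \<in> R \<and> (\<exists>i\<in>S (fst p) (snd p). i \<in> S (fst q) (snd q) \<and>
       loc (fst q) (snd q) i = loc (fst p) (snd p) i)"

lemma Ek_pow: "(Ek R S ^^ k) \<phi> r m \<longleftrightarrow> (\<forall>q. (stK R S ^^ k) (r, m) q \<longrightarrow> \<phi> (fst q) (snd q))"
proof (induction k arbitrary: r m)
  case 0 then show ?case by simp
next
  case (Suc k)
  have "(Ek R S ^^ Suc k) \<phi> r m = Ek R S ((Ek R S ^^ k) \<phi>) r m" by simp
  also have "\<dots> \<longleftrightarrow> (\<forall>p. stK R S (r, m) p \<longrightarrow> (Ek R S ^^ k) \<phi> (fst p) (snd p))"
    by (auto simp: Ek_def Kn_def stK_def)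
  also have "\<dots> \<longleftrightarrow> (\<forall>p. stK R S (r, m) p \<longrightarrow> (\<forall>q. (stK R S ^^ k) p q \<longrightarrow> \<phi> (fst q) (snd q)))"
    using Suc.IH by (metis prod.collapse)
  also have "\<dots> \<longleftrightarrow> (\<forall>q. (stK R S ^^ Suc k) (r, m) q \<longrightarrow> \<phi> (fst q) (snd q))"
    unfolding relpowp_Suc_left by blast
  finally show ?case .
qed

lemma EB_pow: "(EB R S ^^ k) \<phi> r m \<longleftrightarrow> (\<forall>q. (stB R S ^^ k) (r, m) q \<longrightarrow> \<phi> (fst q) (snd q))"
proof (induction k arbitrary: r m)
  case 0 then show ?case by simp
next
  case (Suc k)
  have "(EB R S ^^ Suc k) \<phi> r m = EB R S ((EB R S ^^ k) \<phi>) r m" by simp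
  also have "\<dots> \<longleftrightarrow> (\<forall>p. stB R S (r, m) p \<longrightarrow> (EB R S ^^ k) \<phi> (fst p) (snd p))"
    by (auto simp: EB_def Bel_def Kn_def stB_def)
  also have "\<dots> \<longleftrightarrow> (\<forall>p. stB R S (r, m) p \<longrightarrow> (\<forall>q. (stB R S ^^ k) p q \<longrightarrow> \<phi> (fst q) (snd q)))"
    using Suc.IH by (metis prod.collapse)
  also have "\<dots> \<longleftrightarrow> (\<forall>q. (stB R S ^^ Suc k) (r, m) q \<longrightarrow> \<phi> (fst q) (snd q))"
    unfolding relpowp_Suc_left by blast
  finally show ?case .
qed

lemma Ck_reach: "Ck R S \<phi> r m \<longleftrightarrow> (\<forall>q. (stK R S)\<^sup>+\<^sup>+ (r, m) q \<longrightarrow> \<phi> (fst q) (snd q))"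
  unfolding Ck_def Ek_pow tranclp_power by (auto simp: Suc_le_eq)

lemma CB_reach: "CB R S \<phi> r m \<longleftrightarrow> (\<forall>q. (stB R S)\<^sup>+\<^sup>+ (r, m) q \<longrightarrow> \<phi> (fst q) (snd q))"
  unfolding CB_def EB_pow tranclp_power by (auto simp: Suc_le_eq)



lemma N_sub_A: "Nset E P r m \<subseteq> Aset E P r m" by (auto simp: Nset_def Aset_def)
lemma N_in_A: "i \<in> Nset E P r m \<Longrightarrow> i \<in> Aset E P r m" by (simp add: Nset_def Aset_def)

lemma stN_fix: assumes "iex_wf E" "r \<in> runs E P Ie de t" "t < card (UNIV :: 'a::finite set)"
  shows "stB (runs E P Ie de t) (Nset E P) ((r::('e,'a,'v,'x,'m) run), m) (fixr E P de r m, m)"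
proof -
  obtain j where j: "j \<in> Nset E P r m" using N_nonempty[OF assms] by blast
  then have "j \<in> Aset E P r m" by (rule subsetD[OF N_sub_A])
  then have "j \<in> Nset E P (fixr E P de r m) m" using fixr_N[OF assms(1,2), of m m] by simp
  moreover have "loc (fixr E P de r m) m = loc r m" using fixr_loc[OF assms(2), of m m] by simp
  ultimately show ?thesis using j fixr_runs[OF assms(2)] unfolding stB_def fst_conv snd_conv by metis
qed

lemma stN_unfix: assumes "iex_wf E" "r \<in> runs E P Ie de t" "t < card (UNIV :: 'a::finite set)"
  shows "stB (runs E P Ie de t) (Nset E P) (fixr E P de r m, m) ((r::('e,'a,'v,'x,'m) run), m)"
proof -
  obtain j where j: "j \<in> Nset E P r m" using N_nonempty[OF assms] by blast
  then have "j \<in> Aset E P r m" by (rule subsetD[OF N_sub_A])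
  then have "j \<in> Nset E P (fixr E P de r m) m" using fixr_N[OF assms(1,2), of m m] by simp
  moreover have "loc (fixr E P de r m) m = loc r m" using fixr_loc[OF assms(2), of m m] by simp
  ultimately show ?thesis using j assms(2) unfolding stB_def fst_conv snd_conv by metis
qed

lemma stA_to_N: assumes "iex_wf E" "t < card (UNIV :: 'a::finite set)"
    "fst p \<in> runs E P Ie de t" "stK (runs E P Ie de t) (Aset E P) p q"
  shows "(stB (runs E P Ie de t) (Nset E P))\<^sup>+\<^sup>+ (p :: ('e,'a,'v,'x,'m) run \<times> nat) q"
proof -
  obtain r1 m1 r2 m2 where p: "p = (r1, m1)" and q: "q = (r2, m2)" by fastforce
  let ?R = "runs E P Ie de t"
  have r1: "r1 \<in> ?R" using assms(3) p by simp
  obtain i where i: "i \<in> Aset E P r1 m1" "loc r2 m2 i = loc r1 m1 i" and r2: "r2 \<in> ?R"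
    using assms(4) by (auto simp: stK_def p q)
  have i2: "i \<in> Aset E P r2 m2" using A_alive[OF assms(1) r1] A_alive[OF assms(1) r2] i by simp
  have s1: "stB ?R (Nset E P) (r1, m1) (fixr E P de r1 m1, m1)" using stN_fix[OF assms(1) r1 assms(2)] .
  have s3: "stB ?R (Nset E P) (fixr E P de r2 m2, m2) (r2, m2)" using stN_unfix[OF assms(1) r2 assms(2)] .
  have l1: "loc (fixr E P de r1 m1) m1 = loc r1 m1" using fixr_loc[OF r1, of m1 m1] by simp
  have l2: "loc (fixr E P de r2 m2) m2 = loc r2 m2" using fixr_loc[OF r2, of m2 m2] by simp
  have n1: "i \<in> Nset E P (fixr E P de r1 m1) m1" using i(1) fixr_N[OF assms(1) r1] by simp
  have n2: "i \<in> Nset E P (fixr E P de r2 m2) m2" using i2 fixr_N[OF assms(1) r2] by simp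
  have s2: "stB ?R (Nset E P) (fixr E P de r1 m1, m1) (fixr E P de r2 m2, m2)"
    unfolding stB_def using n1 n2 l1 l2 i(2) fixr_runs[OF r2] by auto
  have "(stB ?R (Nset E P))\<^sup>+\<^sup>+ (fixr E P de r2 m2, m2) (r2, m2)" by (rule tranclp.r_into_trancl, rule s3)
  then have "(stB ?R (Nset E P))\<^sup>+\<^sup>+ (fixr E P de r1 m1, m1) (r2, m2)" by (rule tranclp_into_tranclp2[of "stB ?R (Nset E P)", OF s2])
  then have "(stB ?R (Nset E P))\<^sup>+\<^sup>+ (r1, m1) (r2, m2)" by (rule tranclp_into_tranclp2[of "stB ?R (Nset E P)", OF s1])
  then show ?thesis unfolding p q .
qed

lemma reach_R: "(stB R S)\<^sup>+\<^sup>+ p q \<Longrightarrow> fst q \<in> R"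
  by (induction rule: tranclp_induct) (auto simp: stB_def)

lemma reachK_R: "(stK R S)\<^sup>+\<^sup>+ p q \<Longrightarrow> fst q \<in> R"
  by (induction rule: tranclp_induct) (auto simp: stK_def)

lemma reachA_N: assumes "iex_wf E" "t < card (UNIV :: 'a::finite set)"
  shows "(stK (runs E P Ie de t) (Aset E P))\<^sup>+\<^sup>+ p q \<Longrightarrow> fst p \<in> runs E P Ie de t \<Longrightarrow>
     (stB (runs E P Ie de t) (Nset E P))\<^sup>+\<^sup>+ (p :: ('e,'a,'v,'x,'m) run \<times> nat) q"
proof (induction rule: tranclp_induct)
  case (base y) then show ?case using stA_to_N[OF assms] by blast
next
  case (step y z)
  have "fst y \<in> runs E P Ie de t" using reachK_R[OF step.hyps(1)] .
  then have "(stB (runs E P Ie de t) (Nset E P))\<^sup>+\<^sup>+ y z" using stA_to_N[OF assms _ step.hyps(2)] by blast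
  then show ?case by (rule tranclp_trans[of "stB (runs E P Ie de t) (Nset E P)", OF step.IH[OF step.prems]])
qed

lemma reachN_A: "(stB R (Nset E P))\<^sup>+\<^sup>+ p q \<Longrightarrow> (stK R (Aset E P))\<^sup>+\<^sup>+ p q"
proof (induction rule: tranclp_induct)
  case (base y)
  then have "stK R (Aset E P) p y" unfolding stB_def stK_def using N_in_A by metis
  then show ?case by (rule tranclp.r_into_trancl)
next
  case (step y z)
  have "stK R (Aset E P) y z" using step.hyps(2) N_in_A unfolding stB_def stK_def by metis
  then show ?case by (rule tranclp.trancl_into_trancl[of "stK R (Aset E P)", OF step.IH])
qed

lemma part1: assumes "iex_wf E" "t < card (UNIV :: 'a::finite set)" "r \<in> runs E P Ie de t"
  shows "Ck (runs E P Ie de t) (Aset E P) (decidesS P (Aset E P) v) r m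
     \<longleftrightarrow> CB (runs E P Ie de t) (Nset E P) (decidesS P (Nset E P) v) (r :: ('e,'a,'v,'x,'m) run) m"
proof -
  let ?R = "runs E P Ie de t"
  have "(\<forall>q. (stK ?R (Aset E P))\<^sup>+\<^sup>+ (r, m) q \<longrightarrow> decidesS P (Aset E P) v (fst q) (snd q))
     \<longleftrightarrow> (\<forall>q. (stB ?R (Nset E P))\<^sup>+\<^sup>+ (r, m) q \<longrightarrow> decidesS P (Nset E P) v (fst q) (snd q))"
  proof
    assume H: "\<forall>q. (stK ?R (Aset E P))\<^sup>+\<^sup>+ (r, m) q \<longrightarrow> decidesS P (Aset E P) v (fst q) (snd q)"
    show "\<forall>q. (stB ?R (Nset E P))\<^sup>+\<^sup>+ (r, m) q \<longrightarrow> decidesS P (Nset E P) v (fst q) (snd q)"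
    proof (intro allI impI)
      fix q assume "(stB ?R (Nset E P))\<^sup>+\<^sup>+ (r, m) q"
      then have "decidesS P (Aset E P) v (fst q) (snd q)" using H reachN_A by blast
      then show "decidesS P (Nset E P) v (fst q) (snd q)" unfolding decidesS_def
        using N_in_A[of _ E P "fst q" "snd q"] by blast
    qed
  next
    assume H: "\<forall>q. (stB ?R (Nset E P))\<^sup>+\<^sup>+ (r, m) q \<longrightarrow> decidesS P (Nset E P) v (fst q) (snd q)"
    show "\<forall>q. (stK ?R (Aset E P))\<^sup>+\<^sup>+ (r, m) q \<longrightarrow> decidesS P (Aset E P) v (fst q) (snd q)"
    proof (intro allI impI)
      fix q assume qa: "(stK ?R (Aset E P))\<^sup>+\<^sup>+ (r, m) q"
      have rq: "(stB ?R (Nset E P))\<^sup>+\<^sup>+ (r, m) q" using reachA_N[OF assms(1,2) qa] assms(3) by simp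
      obtain r1 m1 where q: "q = (r1, m1)" by fastforce
      have r1: "r1 \<in> ?R" using reach_R[OF rq] q by simp
      have "(stB ?R (Nset E P))\<^sup>+\<^sup>+ (r, m) (fixr E P de r1 m1, m1)"
        using tranclp.trancl_into_trancl[of "stB ?R (Nset E P)", OF rq[unfolded q] stN_fix[OF assms(1) r1 assms(2)]] q by simp
      then have d: "decidesS P (Nset E P) v (fixr E P de r1 m1) m1" using H by fastforce
      show "decidesS P (Aset E P) v (fst q) (snd q)"
        unfolding decidesS_def q
      proof
        fix i assume "i \<in> Aset E P (fst (r1, m1)) (snd (r1, m1))"
        then have "i \<in> Nset E P (fixr E P de r1 m1) m1" using fixr_N[OF assms(1) r1] by simp
        then have "decides P i v (fixr E P de r1 m1) m1" using d by (simp add: decidesS_def)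
        then show "decides P i v (fst (r1, m1)) (snd (r1, m1))"
          using fixr_loc[OF r1, of m1 m1] by (simp add: decides_def)
      qed
    qed
  qed
  then show ?thesis unfolding Ck_reach CB_reach .
qed

lemma part2: assumes "iex_wf E" "t < card (UNIV :: 'a::finite set)" "r \<in> runs E P Ie de t"
    "i \<in> Aset E P r m"
  shows "Kn (runs E P Ie de t) i (Ck (runs E P Ie de t) (Aset E P) (decidesS P (Aset E P) v)) r m
     \<longleftrightarrow> Bel (runs E P Ie de t) (Nset E P) i (CB (runs E P Ie de t) (Nset E P) (decidesS P (Nset E P) v)) (r :: ('e,'a,'v,'x,'m) run) m"
proof -
  let ?R = "runs E P Ie de t"
  let ?C = "CB ?R (Nset E P) (decidesS P (Nset E P) v)"
  have "Kn ?R i (Ck ?R (Aset E P) (decidesS P (Aset E P) v)) r m \<longleftrightarrow> Kn ?R i ?C r m"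
    unfolding Kn_def using part1[OF assms(1,2), where P=P and Ie=Ie and de=de and v=v] by auto
  also have "\<dots> \<longleftrightarrow> Bel ?R (Nset E P) i ?C r m"
  proof
    assume "Kn ?R i ?C r m" then show "Bel ?R (Nset E P) i ?C r m" by (simp add: Kn_def Bel_def)
  next
    assume B: "Bel ?R (Nset E P) i ?C r m"
    show "Kn ?R i ?C r m" unfolding Kn_def
    proof (intro ballI allI impI)
      fix r' m' assume r': "r' \<in> ?R" and l: "loc r' m' i = loc r m i"
      have "i \<in> Aset E P r' m'" using A_alive[OF assms(1) r'] A_alive[OF assms(1,3)] assms(4) l by simp
      then have iN: "i \<in> Nset E P (fixr E P de r' m') m'" using fixr_N[OF assms(1) r'] by simp
      have "loc (fixr E P de r' m') m' i = loc r m i" using fixr_loc[OF r', of m' m'] l by simp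
      then have c: "?C (fixr E P de r' m') m'" using B iN fixr_runs[OF r'] by (simp add: Bel_def Kn_def)
      have s: "stB ?R (Nset E P) (fixr E P de r' m', m') (r', m')" using stN_unfix[OF assms(1) r' assms(2)] .
      show "?C r' m'" unfolding CB_reach
      proof (intro allI impI)
        fix q assume "(stB ?R (Nset E P))\<^sup>+\<^sup>+ (r', m') q"
        then have "(stB ?R (Nset E P))\<^sup>+\<^sup>+ (fixr E P de r' m', m') q" by (rule tranclp_into_tranclp2[of "stB ?R (Nset E P)", OF s])
        then show "decidesS P (Nset E P) v (fst q) (snd q)" using c unfolding CB_reach by blast
      qed
    qed
  qed
  finally show ?thesis .
qed

theorem proposition9:
  fixes E :: "('a::finite, 'v, 'x, 'm) iex"
    and P :: "'a \<Rightarrow> ('v, 'x) lstate \<Rightarrow> 'v act"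
    and Ie :: "'e set"
    and de :: "'e \<Rightarrow> ('a \<Rightarrow> 'v act) \<Rightarrow> 'e"
    and t :: nat
  defines "R \<equiv> runs E P Ie de t"
  assumes "t < card (UNIV :: 'a set)"
    and "iex_wf E"
    and "hard_crash_protocol P"
    and "SBA_N_valid E P R"
  shows "\<forall>i v.
     valid R (\<lambda>r m. Ck R (Aset E P) (decidesS P (Aset E P) v) r m
                     \<longleftrightarrow> CB R (Nset E P) (decidesS P (Nset E P) v) r m) \<and>
     valid R (\<lambda>r m. i \<in> Aset E P r m \<longrightarrow>
                    (Kn R i (Ck R (Aset E P) (decidesS P (Aset E P) v)) r m
                     \<longleftrightarrow> Bel R (Nset E P) i (CB R (Nset E P) (decidesS P (Nset E P) v)) r m))"
  unfolding R_def valid_def using part1[OF assms(3,2)] part2[OF assms(3,2)] by blast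

end
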